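(* Let $\mathcal{Z}\subseteq\mathbb{R}^d$ be a nonempty compact convex set, let $r:\mathcal{Z}\to\mathbb{R}$ be convex and differentiable on $\mathcal{Z}$, and let $\Theta\ge \max_{z\in\mathcal{Z}} r(z)-\min_{z\in\mathcal{Z}} r(z)$. Let $g:\mathcal{Z}\to\mathbb{R}^d$ and let $z^\star\in\mathcal{Z}$ satisfy $\langle g(z^\star), z^\star-z\rangle\le 0$ for all $z\in\mathcal{Z}$. Let $\nu>0$, $\alpha>0$, $\varepsilon\ge 0$ and $K\in\mathbb{N}$. Suppose $g$ is $\nu$-strongly monotone with respect to $r$, i.e. $\langle g(w)-g(z),w-z\rangle\ge \nu\langle \nabla r(w)-\nabla r(z),w-z\rangle$ for all $w,z\in\mathcal{Z}$. Let $z_0\in\operatorname{argmin}_{z\in\mathcal{Z}} r(z)$, and for $k=1,\dots,K$ let $z_{k-1/2},z_k\in\mathcal{Z}$ be any points satisfying, for all $w\in\mathcal{Z}$, $$\big\langle g(z_{k-1})+\alpha\big(\nabla r(z_{k-1/2})-\nabla r(z_{k-1})\big),\, z_{k-1/2}-w\big\rangle\le \tfrac{\varepsilon}{2},$$ $$\big\langle g(z_{k-1/2})+\alpha\big(\nabla r(z_{k})-\nabla r(z_{k-1})\big)+\nu\big(\nabla r(z_{k})-\nabla r(z_{k-1/2})\big),\, z_{k}-w\big\rangle\le \tfrac{\varepsilon}{2}.$$ Suppose moreover that for every $k\in[K]$ the relative Lipschitz condition $$\langle g(z_{k-1/2})-g(z_{k-1}),\,z_{k-1/2}-z_k\rangle\le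 \alpha\big(V_{z_{k-1/2}}(z_k)+V_{z_{k-1}}(z_{k-1/2})\big)$$ holds. Then $$V_{z_K}(z^\star)\le \Big(\frac{\alpha}{\nu+\alpha}\Big)^K\Theta+\frac{\varepsilon}{\nu}.$$
   Context: For a differentiable convex function $r$, its Bregman divergence is $V_{z'}(z):=V^r_{z'}(z)=r(z)-r(z')-\langle\nabla r(z'),z-z'\rangle\ge 0$. The two displayed conditions say that $z_{k-1/2}$ (resp. $z_k$) is an $\frac{\varepsilon}{2}$-approximate solution of $\min_{z\in\mathcal{Z}}\{\langle g(z_{k-1}),z\rangle+\alpha V_{z_{k-1}}(z)\}$ (resp. $\min_{z\in\mathcal{Z}}\{\langle g(z_{k-1/2}),z\rangle+\alpha V_{z_{k-1}}(z)+\nu V_{z_{k-1/2}}(z)\}$), where $z'$ is an $\varepsilon$-approximate solution of $\min_{\mathcal{Z}} F$ if $\langle\nabla F(z'),z'-w\rangle\le\varepsilon$ for all $w\in\mathcal{Z}$. *)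

theory Defs
  imports "HOL-Analysis.Analysis"
begin

text \<open>Bregman divergence of r (with gradient field Dr):
  V_{z'}(z) = r z - r z' - <Dr z', z - z'>.\<close>
definition bregman :: "('a::real_inner \<Rightarrow> real) \<Rightarrow> ('a \<Rightarrow> 'a) \<Rightarrow> 'a \<Rightarrow> 'a \<Rightarrow> real" where
  "bregman r Dr z' z = r z - r z' - inner (Dr z') (z - z')"

end

theory Submission
  imports Defs
begin
lemma dir_deriv:
  fixes f :: "'a::real_normed_vector \<Rightarrow> real" and d :: "'a \<Rightarrow> real"
  assumes df: "(f has_derivative d) (at x within Z)" and "convex Z" "x \<in> Z" "y \<in> Z"
  shows "((\<lambda>t. (f (x + t *\<^sub>R (y-x)) - f x)/t) \<longlongrightarrow> d (y-x)) (at_right 0)"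
proof -
  let ?p = "\<lambda>t::real. x + t *\<^sub>R (y - x)"
  have p: "(?p has_derivative (\<lambda>t. t *\<^sub>R (y-x))) (at 0 within {0..1})"
    by (auto intro!: derivative_eq_intros)
  have sub: "?p ` {0..1} \<subseteq> Z"
  proof
    fix u assume "u \<in> ?p ` {0..1}"
    then obtain t where t: "t \<in> {0..1}" "u = ?p t" by auto
    have "u = (1 - t) *\<^sub>R x + t *\<^sub>R y" using t by (simp add: algebra_simps)
    then show "u \<in> Z" using assms(2-4) t by (auto simp: convex_def)
  qed
  have df': "(f has_derivative d) (at (?p 0) within ?p ` {0..1})"
    using has_derivative_subset[OF df sub] by simp
  have "((f \<circ> ?p) has_derivative (d \<circ> (\<lambda>t. t *\<^sub>R (y-x)))) (at 0 within {0..1})"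
    by (rule diff_chain_within[OF p df'])
  moreover have "d \<circ> (\<lambda>t. t *\<^sub>R (y-x)) = (\<lambda>t. d (y - x) * t)"
    using has_derivative_linear[OF df] by (auto simp: linear_scale fun_eq_iff)
  ultimately have "((f \<circ> ?p) has_field_derivative d (y-x)) (at 0 within {0..1})"
    by (simp add: has_field_derivative_def)
  then have "((\<lambda>t. ((f \<circ> ?p) t - (f \<circ> ?p) 0)/(t - 0)) \<longlongrightarrow> d (y-x)) (at 0 within {0..1})"
    by (simp only: has_field_derivative_iff)
  then show ?thesis by (simp add: at_within_Icc_at_right)
qed

lemma tangent_le:
  fixes f :: "'a::real_normed_vector \<Rightarrow> real"
  assumes df: "(f has_derivative d) (at x within Z)" and "convex Z" "x \<in> Z" "y \<in> Z"
    and cv: "convex_on Z f"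
  shows "d (y - x) \<le> f y - f x"
proof -
  have lim: "((\<lambda>t. (f (x + t *\<^sub>R (y-x)) - f x)/t) \<longlongrightarrow> d (y-x)) (at_right 0)"
    by (rule dir_deriv[OF assms(1-4)])
  have "\<forall>\<^sub>F t in at_right 0. (f (x + t *\<^sub>R (y-x)) - f x)/t \<le> f y - f x"
  proof -
    have "\<forall>\<^sub>F t in at_right (0::real). t \<in> {0<..<1}"
      by (rule eventually_at_right_real) simp
    moreover have "(f (x + t *\<^sub>R (y-x)) - f x)/t \<le> f y - f x" if t: "t \<in> {0<..<1}" for t
    proof -
      have e: "x + t *\<^sub>R (y-x) = (1 - t) *\<^sub>R x + t *\<^sub>R y" by (simp add: algebra_simps)
      have "f ((1 - t) *\<^sub>R x + t *\<^sub>R y) \<le> (1 - t) * f x + t * f y"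
        using cv assms(3,4) t by (intro convex_onD) auto
      then have "f (x + t *\<^sub>R (y-x)) - f x \<le> t * (f y - f x)" unfolding e by (simp add: algebra_simps)
      then show ?thesis using t by (simp add: divide_simps mult.commute)
    qed
    ultimately show ?thesis by (auto elim: eventually_mono)
  qed
  then show ?thesis by (intro tendsto_upperbound[OF lim]) auto
qed

lemma min_opt:
  fixes f :: "'a::real_normed_vector \<Rightarrow> real"
  assumes df: "(f has_derivative d) (at x within Z)" and "convex Z" "x \<in> Z" "y \<in> Z"
    and mn: "\<And>w. w \<in> Z \<Longrightarrow> f x \<le> f w"
  shows "d (y - x) \<ge> 0"
proof -
  have lim: "((\<lambda>t. (f (x + t *\<^sub>R (y-x)) - f x)/t) \<longlongrightarrow> d (y-x)) (at_right 0)"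
    by (rule dir_deriv[OF assms(1-4)])
  have "\<forall>\<^sub>F t in at_right 0. 0 \<le> (f (x + t *\<^sub>R (y-x)) - f x)/t"
  proof -
    have "\<forall>\<^sub>F t in at_right (0::real). t \<in> {0<..<1}"
      by (rule eventually_at_right_real) simp
    moreover have "0 \<le> (f (x + t *\<^sub>R (y-x)) - f x)/t" if t: "t \<in> {0<..<1}" for t
    proof -
      have e: "x + t *\<^sub>R (y-x) = (1 - t) *\<^sub>R x + t *\<^sub>R y" by (simp add: algebra_simps)
      have "x + t *\<^sub>R (y-x) \<in> Z" unfolding e using assms(2-4) t by (auto simp: convex_def)
      then show ?thesis using mn t by simp
    qed
    ultimately show ?thesis by (auto elim: eventually_mono)
  qed
  then show ?thesis by (intro tendsto_lowerbound[OF lim]) auto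
qed

lemma three_point:
  "inner (Dr b - Dr a) (b - w) = bregman r Dr a b + bregman r Dr b w - bregman r Dr a w"
  by (simp add: bregman_def inner_diff_left inner_diff_right)
lemma key_step:
  fixes a h b s :: "'a::real_inner"
  assumes S1: "inner (g a + \<alpha> *\<^sub>R (Dr h - Dr a)) (h - b) \<le> \<epsilon> / 2"
    and S2: "inner (g h + \<alpha> *\<^sub>R (Dr b - Dr a) + \<nu> *\<^sub>R (Dr b - Dr h)) (b - s) \<le> \<epsilon> / 2"
    and RL: "inner (g h - g a) (h - b) \<le> \<alpha> * (bregman r Dr h b + bregman r Dr a h)"
    and SM: "inner (g h - g s) (h - s) \<ge> \<nu> * inner (Dr h - Dr s) (h - s)"
    and ZS: "inner (g s) (s - h) \<le> 0"
    and N1: "bregman r Dr h b \<ge> 0" and N2: "bregman r Dr s h \<ge> 0" and nu: "\<nu> \<ge> 0"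
  shows "(\<alpha> + \<nu>) * bregman r Dr b s \<le> \<alpha> * bregman r Dr a s + \<epsilon>"
proof -
  have t1: "\<alpha> * inner (Dr h - Dr a) (h - b) = \<alpha> * (bregman r Dr a h + bregman r Dr h b - bregman r Dr a b)"
    by (simp add: three_point)
  have t2: "\<alpha> * inner (Dr b - Dr a) (b - s) = \<alpha> * (bregman r Dr a b + bregman r Dr b s - bregman r Dr a s)"
    by (simp add: three_point)
  have t3: "\<nu> * inner (Dr b - Dr h) (b - s) = \<nu> * (bregman r Dr h b + bregman r Dr b s - bregman r Dr h s)"
    by (simp add: three_point)
  have t4: "\<nu> * inner (Dr h - Dr s) (h - s) = \<nu> * (bregman r Dr s h + bregman r Dr h s)"
    by (simp add: bregman_def inner_diff_left inner_diff_right algebra_simps)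
  have S1': "inner (g a) (h - b) + \<alpha> * inner (Dr h - Dr a) (h - b) \<le> \<epsilon> / 2"
    using S1 by (simp add: inner_add_left)
  have S2': "inner (g h) (b - s) + \<alpha> * inner (Dr b - Dr a) (b - s) + \<nu> * inner (Dr b - Dr h) (b - s) \<le> \<epsilon> / 2"
    using S2 by (simp add: inner_add_left)
  have e1: "inner (g h) (b - s) + inner (g a) (h - b) = inner (g h - g s) (h - s) + (- inner (g s) (s - h)) - inner (g h - g a) (h - b)"
    by (simp add: inner_diff_left inner_diff_right)
  have "\<nu> * bregman r Dr h b \<ge> 0" "\<nu> * bregman r Dr s h \<ge> 0" using N1 N2 nu by auto
  then show ?thesis using S1' S2' e1 t1 t2 t3 t4 RL SM ZS by (simp add: algebra_simps)
qed


theorem mainTheorem1: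
  fixes Z :: "(real ^ 'd) set"
    and r :: "real ^ 'd \<Rightarrow> real"
    and Dr :: "real ^ 'd \<Rightarrow> real ^ 'd"
    and g :: "real ^ 'd \<Rightarrow> real ^ 'd"
    and zstar :: "real ^ 'd"
    and zh z :: "nat \<Rightarrow> real ^ 'd"
    and \<Theta> \<nu> \<alpha> \<epsilon> :: real
    and K :: nat
  assumes Z: "Z \<noteq> {}" "compact Z" "convex Z"
    and r_convex: "convex_on Z r"
    and r_diff: "\<And>x. x \<in> Z \<Longrightarrow> (r has_derivative (\<lambda>h. inner (Dr x) h)) (at x within Z)"
    and Theta: "\<Theta> \<ge> Sup (r ` Z) - Inf (r ` Z)"
    and zstar: "zstar \<in> Z" "\<And>w. w \<in> Z \<Longrightarrow> inner (g zstar) (zstar - w) \<le> 0"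
    and params: "\<nu> > 0" "\<alpha> > 0" "\<epsilon> \<ge> 0"
    and strong_mono: "\<And>w x. w \<in> Z \<Longrightarrow> x \<in> Z \<Longrightarrow>
        inner (g w - g x) (w - x) \<ge> \<nu> * inner (Dr w - Dr x) (w - x)"
    and z0: "z 0 \<in> Z" "\<And>w. w \<in> Z \<Longrightarrow> r (z 0) \<le> r w"
    and iter_in: "\<And>k. k \<in> {1..K} \<Longrightarrow> zh k \<in> Z \<and> z k \<in> Z"
    and step1: "\<And>k w. k \<in> {1..K} \<Longrightarrow> w \<in> Z \<Longrightarrow>
        inner (g (z (k - 1)) + \<alpha> *\<^sub>R (Dr (zh k) - Dr (z (k - 1)))) (zh k - w) \<le> \<epsilon> / 2"
    and step2: "\<And>k w. k \<in> {1..K} \<Longrightarrow> w \<in> Z \<Longrightarrow>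
        inner (g (zh k) + \<alpha> *\<^sub>R (Dr (z k) - Dr (z (k - 1))) + \<nu> *\<^sub>R (Dr (z k) - Dr (zh k)))
              (z k - w) \<le> \<epsilon> / 2"
    and rel_lip: "\<And>k. k \<in> {1..K} \<Longrightarrow>
        inner (g (zh k) - g (z (k - 1))) (zh k - z k)
          \<le> \<alpha> * (bregman r Dr (zh k) (z k) + bregman r Dr (z (k - 1)) (zh k))"
  shows "bregman r Dr (z K) zstar \<le> (\<alpha> / (\<nu> + \<alpha>)) ^ K * \<Theta> + \<epsilon> / \<nu>"
proof -
  have nn: "bregman r Dr x y \<ge> 0" if "x \<in> Z" "y \<in> Z" for x y
    using tangent_le[OF r_diff[OF that(1)] Z(3) that r_convex] by (simp add: bregman_def)
  have zin: "z k \<in> Z" if "k \<le> K" for k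
    using that z0(1) iter_in[of k] by (cases k) auto
  define V where "V k = bregman r Dr (z k) zstar" for k
  have step: "(\<alpha> + \<nu>) * V k \<le> \<alpha> * V (k - 1) + \<epsilon>" if k: "k \<in> {1..K}" for k
  proof -
    have a: "z (k-1) \<in> Z" using zin k by auto
    have h: "zh k \<in> Z" and b: "z k \<in> Z" using iter_in[OF k] by auto
    show ?thesis unfolding V_def
      by (rule key_step[OF step1[OF k b] step2[OF k zstar(1)] rel_lip[OF k]
            strong_mono[OF h zstar(1)] zstar(2)[OF h] nn[OF h b] nn[OF zstar(1) h]])
         (use params in auto)
  qed
  have cont: "continuous_on Z r"
    using has_derivative_continuous[OF r_diff] by (auto simp: continuous_on_eq_continuous_within)
  have cpt: "compact (r ` Z)" by (rule compact_continuous_image[OF cont Z(2)])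
  have "r zstar \<le> Sup (r ` Z)"
    using cpt zstar(1) by (intro cSup_upper) (auto intro: bounded_imp_bdd_above compact_imp_bounded)
  moreover have "Inf (r ` Z) \<le> r (z 0)"
    using cpt z0(1) by (intro cInf_lower) (auto intro: bounded_imp_bdd_below compact_imp_bounded)
  moreover have "inner (Dr (z 0)) (zstar - z 0) \<ge> 0"
    using min_opt[OF r_diff[OF z0(1)] Z(3) z0(1) zstar(1) z0(2)] by simp
  ultimately have V0: "V 0 \<le> \<Theta>" using Theta by (simp add: V_def bregman_def)
  have "k \<le> K \<Longrightarrow> V k \<le> (\<alpha> / (\<nu> + \<alpha>)) ^ k * \<Theta> + \<epsilon> / \<nu>" for k
  proof (induction k)
    case 0
    have "\<epsilon> / \<nu> \<ge> 0" using params by simp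
    then show ?case using V0 by simp
  next
    case (Suc k)
    have IH: "V k \<le> (\<alpha> / (\<nu> + \<alpha>)) ^ k * \<Theta> + \<epsilon> / \<nu>" using Suc by simp
    have st: "(\<alpha> + \<nu>) * V (Suc k) \<le> \<alpha> * V k + \<epsilon>" using step[of "Suc k"] Suc.prems by simp
    have "\<alpha> * V k \<le> \<alpha> * ((\<alpha> / (\<nu> + \<alpha>)) ^ k * \<Theta> + \<epsilon> / \<nu>)"
      using IH params by (intro mult_left_mono) auto
    with st have "(\<alpha> + \<nu>) * V (Suc k) \<le> \<alpha> * ((\<alpha> / (\<nu> + \<alpha>)) ^ k * \<Theta> + \<epsilon> / \<nu>) + \<epsilon>"
      by linarith
    also have "\<dots> = (\<alpha> + \<nu>) * ((\<alpha> / (\<nu> + \<alpha>)) ^ Suc k * \<Theta> + \<epsilon> / \<nu>)"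
    proof -
      have q: "(\<alpha> + \<nu>) * (\<alpha> / (\<nu> + \<alpha>)) = \<alpha>" using params by (simp add: field_simps)
      have "(\<alpha> + \<nu>) * (\<alpha> / (\<nu> + \<alpha>)) ^ Suc k * \<Theta> = \<alpha> * (\<alpha> / (\<nu> + \<alpha>)) ^ k * \<Theta>"
        by (metis q mult.assoc mult.commute power_Suc)
      moreover have "(\<alpha> + \<nu>) * (\<epsilon> / \<nu>) = \<alpha> * (\<epsilon> / \<nu>) + \<epsilon>" using params by (simp add: field_simps)
      ultimately show ?thesis by (simp add: algebra_simps)
    qed
    finally show ?case using params by (simp add: mult_le_cancel_left_pos)
  qed
  then show ?thesis by (simp add: V_def)
qed

end
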